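(* Let $F$ be a commutative field, let $n\ge 1$ and $0\le k\le n-1$, and let $\chi:\Gamma(n,k,F)\to \mathrm{PG}(n,F)^*$ be a linear mapping satisfying the null property: $U\subseteq U^\chi$ for each $U\in\mathbb D(\chi)$. Then $\chi$ is a (generalised) polarity, i.e. for all $k$-subspaces $U_1,U_2$ that are collinear in $\Gamma(n,k,F)$, $U_1\subseteq U_2^\chi$ implies $U_2\subseteq U_1^\chi$, where for an exceptional $U\in\mathbb A(\chi)$ one sets $U^\chi$ to be the whole space $\mathrm{PG}(n,F)$.
   Context: $\mathrm{PG}(n,F)$ is the $n$-dimensional projective space over $F$; a $d$-subspace is a projective subspace of dimension $d$. For subspaces $U\subseteq W$, $[U,W]_d$ is the set of $d$-subspaces $X$ with $U\subseteq X\subseteq W$. The Grassmannian $\Gamma(n,k,F)$ is the semilinear space whose points (G-points) are the $k$-subspaces of $\mathrm{PG}(n,F)$ and whose lines (G-lines) are the pencils $[U,W]_k$ with $\dim U=k-1$, $\dim W=k+1$; two G-points are collinear if some G-line contains both (for $k=0$ this is $\mathrm{PG}(n,F)$ itself). $\mathrm{PG}(n,F)^*$ is the dual projective space (points are hyperplanes, lines are pencils of hyperplanes through an $(n-2)$-subspace). A partial map $\chi$ from a set $\mathcal P$ to $\mathcal P'$ is a map defined on a subset $\mathbb D(\chi)$ (domain); $\mathbb A(\chi)=\mathcal P\setminus\mathbb D(\chi)$ is the exceptional set; for a subset $\phi$, $\phi^\chi=\{X^\chi: X\in\phi\cap\mathbb D(\chi)\}$. A partial map between semilinear spaces is a linear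 mapping if for each line $\ell$ exactly one of the following holds: (i) $\ell^\chi$ is a line and $\chi$ maps $\ell$ bijectively onto $\ell^\chi$; (ii) $\ell^\chi$ is a single point and $|\ell\cap\mathbb A(\chi)|=1$; (iii) $\ell\subseteq\mathbb A(\chi)$. *)

theory Defs
  imports Complex_Main "HOL-Library.Function_Algebras"
begin

text \<open>The underlying vector space of PG(n,F) is F^(n+1), modelled as the
functions v :: nat => F with v i = 0 for i > n. Projective d-subspaces are
linear subspaces of (linear) dimension d+1 of this space.\<close>

definition fsc :: "'a::field \<Rightarrow> (nat \<Rightarrow> 'a) \<Rightarrow> (nat \<Rightarrow> 'a)" where
  "fsc c v = (\<lambda>i. c * v i)"

interpretation fv: vector_space "fsc :: 'a::field \<Rightarrow> (nat \<Rightarrow> 'a) \<Rightarrow> (nat \<Rightarrow> 'a)"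
  by unfold_locales (auto simp: fsc_def algebra_simps fun_eq_iff)

definition ambient :: "nat \<Rightarrow> (nat \<Rightarrow> 'a::field) set" where
  "ambient n = {v. \<forall>i>n. v i = 0}"

text \<open>Projective d-subspace of PG(n,F) (d may be -1 for the empty subspace,
hence the linear dimension dl = d+1 is used as parameter).\<close>
definition lsub :: "nat \<Rightarrow> nat \<Rightarrow> (nat \<Rightarrow> 'a::field) set \<Rightarrow> bool" where
  "lsub n dl U \<longleftrightarrow> fv.subspace U \<and> U \<subseteq> ambient n \<and> fv.dim U = dl"

definition psub :: "nat \<Rightarrow> nat \<Rightarrow> (nat \<Rightarrow> 'a::field) set \<Rightarrow> bool" where
  "psub n d U \<longleftrightarrow> lsub n (d + 1) U"

definition interval :: "nat \<Rightarrow> nat \<Rightarrow> (nat \<Rightarrow> 'a::field) set \<Rightarrow> (nat \<Rightarrow> 'a) set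
    \<Rightarrow> (nat \<Rightarrow> 'a) set set" where
  "interval n d U W = {X. psub n d X \<and> U \<subseteq> X \<and> X \<subseteq> W}"

definition gpoint :: "nat \<Rightarrow> nat \<Rightarrow> (nat \<Rightarrow> 'a::field) set \<Rightarrow> bool" where
  "gpoint n k U \<longleftrightarrow> psub n k U"

definition gline :: "nat \<Rightarrow> nat \<Rightarrow> (nat \<Rightarrow> 'a::field) set set \<Rightarrow> bool" where
  "gline n k L \<longleftrightarrow> (\<exists>U W. lsub n k U \<and> psub n (k + 1) W \<and> U \<subseteq> W \<and> L = interval n k U W)"
  \<comment> \<open>lsub n k U: U is a projective (k-1)-subspace\<close>

definition gcollinear :: "nat \<Rightarrow> nat \<Rightarrow> (nat \<Rightarrow> 'a::field) set \<Rightarrow> (nat \<Rightarrow> 'a) set \<Rightarrow> bool" where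
  "gcollinear n k U1 U2 \<longleftrightarrow> (\<exists>L. gline n k L \<and> U1 \<in> L \<and> U2 \<in> L)"

text \<open>The dual space PG(n,F)^*: points are hyperplanes, lines are pencils of
hyperplanes through an (n-2)-subspace.\<close>
definition dpoint :: "nat \<Rightarrow> (nat \<Rightarrow> 'a::field) set \<Rightarrow> bool" where
  "dpoint n H \<longleftrightarrow> psub n (n - 1) H"

definition dline :: "nat \<Rightarrow> (nat \<Rightarrow> 'a::field) set set \<Rightarrow> bool" where
  "dline n L \<longleftrightarrow> (\<exists>S. lsub n (n - 1) S \<and> L = interval n (n - 1) S (ambient n))"

text \<open>Partial maps are modelled as functions into option: the domain is the set
of G-points with a Some-value, the exceptional set the G-points mapped to None.\<close>
definition pimage :: "('b \<Rightarrow> 'c option) \<Rightarrow> 'b set \<Rightarrow> 'c set" where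
  "pimage chi L = {H. \<exists>X\<in>L. chi X = Some H}"

definition linear_mapping :: "nat \<Rightarrow> nat \<Rightarrow> ((nat \<Rightarrow> 'a::field) set \<Rightarrow> (nat \<Rightarrow> 'a) set option) \<Rightarrow> bool" where
  "linear_mapping n k chi \<longleftrightarrow>
     (\<forall>U. gpoint n k U \<longrightarrow> (\<forall>H. chi U = Some H \<longrightarrow> dpoint n H)) \<and>
     (\<forall>L. gline n k L \<longrightarrow>
        ((dline n (pimage chi L) \<and> (\<forall>X\<in>L. chi X \<noteq> None) \<and>
            inj_on (\<lambda>X. the (chi X)) L)
         \<or> ((\<exists>H. pimage chi L = {H}) \<and> card {X\<in>L. chi X = None} = 1)
         \<or> (\<forall>X\<in>L. chi X = None)))"

definition ext_img :: "nat \<Rightarrow> ((nat \<Rightarrow> 'a::field) set \<Rightarrow> (nat \<Rightarrow> 'a) set option)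
    \<Rightarrow> (nat \<Rightarrow> 'a) set \<Rightarrow> (nat \<Rightarrow> 'a) set" where
  "ext_img n chi U = (case chi U of Some H \<Rightarrow> H | None \<Rightarrow> ambient n)"

end

theory Submission imports Defs begin

lemma sum_fun_apply: "finite A \<Longrightarrow> (\<Sum>i\<in>A. f i) (j::nat) = (\<Sum>i\<in>A. f i j)"
  by (induction A rule: finite_induct) auto

definition ev :: "nat \<Rightarrow> nat \<Rightarrow> 'a::field" where "ev i = (\<lambda>j. if j = i then 1 else 0)"

lemma ambient_span: "ambient n \<subseteq> fv.span (ev ` {..n} :: (nat \<Rightarrow> 'a::field) set)"
proof
  fix v :: "nat \<Rightarrow> 'a" assume v: "v \<in> ambient n"
  have "v = (\<Sum>i\<in>{..n}. fsc (v i) (ev i))"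
  proof
    fix j
    have "(\<Sum>i\<in>{..n}. fsc (v i) (ev i)) j = (\<Sum>i\<in>{..n}. v i * (if j = i then 1 else 0))"
      by (simp add: sum_fun_apply fsc_def ev_def)
    also have "\<dots> = (if j \<le> n then v j else 0)"
      by (simp add: if_distrib[of "\<lambda>x. v _ * x"] sum.delta' cong: if_cong)
    also have "\<dots> = v j" using v by (auto simp: ambient_def)
    finally show "v j = (\<Sum>i\<in>{..n}. fsc (v i) (ev i)) j" by simp
  qed
  also have "\<dots> \<in> fv.span (ev ` {..n})"
    by (intro fv.span_sum fv.span_scale fv.span_base) auto
  finally show "v \<in> fv.span (ev ` {..n})" .
qed

lemma amb_fin: "fv.independent B \<Longrightarrow> B \<subseteq> ambient n \<Longrightarrow> finite (B :: (nat \<Rightarrow> 'a::field) set)"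
  using fv.independent_span_bound[of "ev ` {..n}" B] ambient_span[of n] by auto

lemma dimL1:
  fixes A C :: "(nat \<Rightarrow> 'a::field) set"
  assumes "fv.subspace A" "fv.subspace C" "A \<subseteq> C" "C \<subseteq> ambient n"
  shows "fv.dim A \<le> fv.dim C \<and> (A \<noteq> C \<longrightarrow> fv.dim A < fv.dim C)"
proof -
  obtain BA where BA: "BA \<subseteq> A" "fv.independent BA" "A \<subseteq> fv.span BA" "card BA = fv.dim A"
    using fv.basis_exists by blast
  obtain B where B: "BA \<subseteq> B" "B \<subseteq> C" "fv.independent B" "C \<subseteq> fv.span B"
    using fv.maximal_independent_subset_extend[of BA C] BA assms by blast
  have cB: "card B = fv.dim C" using fv.basis_card_eq_dim B by blast
  have fB: "finite B" using amb_fin B assms by blast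
  have le: "card BA \<le> card B" using fB B card_mono by blast
  moreover have "A \<noteq> C \<Longrightarrow> card BA < card B"
  proof -
    assume ne: "A \<noteq> C"
    have "BA \<noteq> B"
    proof
      assume "BA = B"
      then have "C \<subseteq> A" using B BA fv.span_minimal[of BA A] assms by blast
      then show False using ne assms by blast
    qed
    then show ?thesis using fB B psubset_card_mono by blast
  qed
  ultimately show ?thesis using cB BA by auto
qed

lemma dim_eqI:
  fixes A C :: "(nat \<Rightarrow> 'a::field) set"
  assumes "fv.subspace A" "fv.subspace C" "A \<subseteq> C" "C \<subseteq> ambient n" "fv.dim C \<le> fv.dim A"
  shows "A = C"
  using dimL1[OF assms(1-4)] assms(5) by auto

lemma dim_insert_le:
  fixes S :: "(nat \<Rightarrow> 'a::field) set"
  assumes "S \<subseteq> ambient n"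
  shows "fv.dim (fv.span (insert x S)) \<le> fv.dim S + 1"
proof -
  obtain BS where BS: "BS \<subseteq> S" "fv.independent BS" "S \<subseteq> fv.span BS" "card BS = fv.dim S"
    using fv.basis_exists by blast
  have f: "finite BS" using amb_fin BS assms by blast
  have "fv.span (insert x S) \<subseteq> fv.span (insert x BS)"
  proof (rule fv.span_minimal)
    have "fv.span BS \<subseteq> fv.span (insert x BS)" by (rule fv.span_mono) auto
    then show "insert x S \<subseteq> fv.span (insert x BS)" using BS fv.span_base[of x "insert x BS"] by auto
  qed (rule fv.subspace_span)
  then have "fv.dim (fv.span (insert x S)) \<le> card (insert x BS)"
    using fv.dim_le_card[of "fv.span (insert x S)" "insert x BS"] f by auto
  also have "\<dots> \<le> card BS + 1" using f card_insert_le_m1 by (simp add: card_insert_if)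
  finally show ?thesis using BS by simp
qed


lemma hyp_inter:
  fixes H H' S :: "(nat \<Rightarrow> 'a::field) set"
  assumes n: "n \<ge> 1" and H: "psub n (n-1) H" and H': "psub n (n-1) H'" and ne: "H \<noteq> H'"
    and S: "lsub n (n-1) S" and SH: "S \<subseteq> H" and SH': "S \<subseteq> H'"
  shows "H \<inter> H' = S"
proof -
  have h: "fv.subspace H" "H \<subseteq> ambient n" "fv.dim H = n"
    using H n by (auto simp: psub_def lsub_def)
  have h': "fv.subspace H'" "H' \<subseteq> ambient n" "fv.dim H' = n"
    using H' n by (auto simp: psub_def lsub_def)
  have s: "fv.subspace S" "fv.dim S = n - 1" using S by (auto simp: lsub_def)
  have si: "fv.subspace (H \<inter> H')" using h h' fv.subspace_inter by blast
  have "H \<inter> H' \<noteq> H"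
  proof
    assume "H \<inter> H' = H"
    then have "H \<subseteq> H'" by blast
    then have "H = H'" using dim_eqI[of H H' n] h h' by auto
    then show False using ne by simp
  qed
  then have "fv.dim (H \<inter> H') < n" using dimL1[of "H \<inter> H'" H n] si h by auto
  moreover have "fv.dim S \<le> fv.dim (H \<inter> H')" using dimL1[of S "H \<inter> H'" n] s si h SH SH' by auto
  ultimately have "fv.dim (H \<inter> H') \<le> fv.dim S" using s by linarith
  then show ?thesis using dim_eqI[of S "H \<inter> H'" n] s si h SH SH' by auto
qed

lemma span2:
  fixes X Y W T :: "(nat \<Rightarrow> 'a::field) set"
  assumes X: "psub n k X" and Y: "psub n k Y" and ne: "X \<noteq> Y"
    and XW: "X \<subseteq> W" and YW: "Y \<subseteq> W" and W: "psub n (k+1) W"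
    and T: "fv.subspace T" and XT: "X \<subseteq> T" and YT: "Y \<subseteq> T"
  shows "W \<subseteq> T"
proof -
  have x: "fv.subspace X" "fv.dim X = k + 1" using X by (auto simp: psub_def lsub_def)
  have y: "fv.subspace Y" "fv.dim Y = k + 1" using Y by (auto simp: psub_def lsub_def)
  have w: "fv.subspace W" "W \<subseteq> ambient n" "fv.dim W = k + 2" using W by (auto simp: psub_def lsub_def)
  define Z where "Z = W \<inter> T"
  have z: "fv.subspace Z" "Z \<subseteq> W" "Z \<subseteq> ambient n" using w T fv.subspace_inter Z_def by auto
  have xz: "X \<subseteq> Z" "Y \<subseteq> Z" using XW YW XT YT Z_def by auto
  have "fv.dim X \<le> fv.dim Z" using dimL1[of X Z n] x z xz by auto
  moreover have "fv.dim Z \<le> fv.dim W" using dimL1[of Z W n] z w by auto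
  moreover have "fv.dim Z \<noteq> k + 1"
  proof
    assume d: "fv.dim Z = k + 1"
    have "X = Z" using dim_eqI[of X Z n] x z xz d by auto
    moreover have "Y = Z" using dim_eqI[of Y Z n] y z xz d by auto
    ultimately show False using ne by simp
  qed
  ultimately have "fv.dim W \<le> fv.dim Z" using x w by linarith
  then have "Z = W" using dim_eqI[of Z W n] z w by auto
  then show ?thesis using Z_def by auto
qed

lemma third:
  fixes S W U1 U2 :: "(nat \<Rightarrow> 'a::field) set"
  assumes S: "lsub n k S" and W: "psub n (k+1) W"
    and U1: "U1 \<in> interval n k S W" and U2: "U2 \<in> interval n k S W" and ne: "U1 \<noteq> U2"
  shows "\<exists>X \<in> interval n k S W. X \<noteq> U1 \<and> X \<noteq> U2"
proof -
  have s: "fv.subspace S" "S \<subseteq> ambient n" "fv.dim S = k" using S by (auto simp: lsub_def)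
  have w: "fv.subspace W" "W \<subseteq> ambient n" using W by (auto simp: psub_def lsub_def)
  have u1: "fv.subspace U1" "fv.dim U1 = k + 1" "S \<subseteq> U1" "U1 \<subseteq> W"
    using U1 by (auto simp: interval_def psub_def lsub_def)
  have u2: "fv.subspace U2" "fv.dim U2 = k + 1" "S \<subseteq> U2" "U2 \<subseteq> W"
    using U2 by (auto simp: interval_def psub_def lsub_def)
  have "\<not> U1 \<subseteq> U2"
  proof
    assume "U1 \<subseteq> U2"
    then have "U1 = U2" using dim_eqI[of U1 U2 n] u1 u2 w by auto
    then show False using ne by simp
  qed
  then obtain u where u: "u \<in> U1" "u \<notin> U2" by blast
  have "\<not> U2 \<subseteq> U1"
  proof
    assume "U2 \<subseteq> U1"
    then have "U2 = U1" using dim_eqI[of U2 U1 n] u1 u2 w by auto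
    then show False using ne by simp
  qed
  then obtain v where v: "v \<in> U2" "v \<notin> U1" by blast
  define X where "X = fv.span (insert (u + v) S)"
  have uvW: "u + v \<in> W" using u v u1 u2 w fv.subspace_add by blast
  have uvU2: "u + v \<notin> U2"
  proof
    assume "u + v \<in> U2"
    then have "(u + v) - v \<in> U2" using v u2 fv.subspace_diff by blast
    then show False using u by simp
  qed
  have uvU1: "u + v \<notin> U1"
  proof
    assume "u + v \<in> U1"
    then have "(u + v) - u \<in> U1" using u u1 fv.subspace_diff by blast
    then show False using v by simp
  qed
  have xs: "fv.subspace X" using X_def fv.subspace_span by blast
  have SX: "S \<subseteq> X" unfolding X_def using fv.span_superset by blast
  have XW: "X \<subseteq> W" unfolding X_def using fv.span_minimal[of "insert (u+v) S" W] uvW u1 w by blast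
  have uvX: "u + v \<in> X" unfolding X_def using fv.span_base by blast
  have "S \<noteq> X" using uvX uvU2 u2 by blast
  then have "k < fv.dim X" using dimL1[of S X n] s xs SX XW w by auto
  moreover have "fv.dim X \<le> k + 1" using dim_insert_le[of S n "u+v"] s X_def by simp
  ultimately have "fv.dim X = k + 1" by simp
  then have "X \<in> interval n k S W" using xs SX XW w by (auto simp: interval_def psub_def lsub_def)
  moreover have "X \<noteq> U1" using uvX uvU1 by blast
  moreover have "X \<noteq> U2" using uvX uvU2 by blast
  ultimately show ?thesis by blast
qed


theorem theorem5p1:
  fixes n k :: nat
    and chi :: "(nat \<Rightarrow> 'a::field) set \<Rightarrow> (nat \<Rightarrow> 'a) set option"
  assumes "n \<ge> 1" and "k \<le> n - 1"
    and "linear_mapping n k chi"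
    and null: "\<And>U H. gpoint n k U \<Longrightarrow> chi U = Some H \<Longrightarrow> U \<subseteq> H"
  shows "\<forall>U1 U2. gpoint n k U1 \<and> gpoint n k U2 \<and> gcollinear n k U1 U2 \<longrightarrow>
           U1 \<subseteq> ext_img n chi U2 \<longrightarrow> U2 \<subseteq> ext_img n chi U1"
proof (intro allI impI, elim conjE)
  fix U1 U2 :: "(nat \<Rightarrow> 'a) set"
  assume g1: "gpoint n k U1" and g2: "gpoint n k U2" and col: "gcollinear n k U1 U2"
    and hyp: "U1 \<subseteq> ext_img n chi U2"
  have lm1: "\<And>U H. gpoint n k U \<Longrightarrow> chi U = Some H \<Longrightarrow> dpoint n H"
    using assms(3) unfolding linear_mapping_def by blast
  have U2amb: "U2 \<subseteq> ambient n" using g2 by (auto simp: gpoint_def psub_def lsub_def)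
  show "U2 \<subseteq> ext_img n chi U1"
  proof (cases "U1 = U2")
    case True then show ?thesis using hyp by simp
  next
    case ne: False
    show ?thesis
    proof (cases "chi U1")
      case None then show ?thesis using U2amb by (simp add: ext_img_def)
    next
      case (Some H1)
      then have e1: "ext_img n chi U1 = H1" by (simp add: ext_img_def)
      from col obtain L where gl: "gline n k L" and inL: "U1 \<in> L" "U2 \<in> L"
        unfolding gcollinear_def by blast
      from gl obtain S W where S: "lsub n k S" and W: "psub n (k+1) W" and SW: "S \<subseteq> W"
        and Ld: "L = interval n k S W" unfolding gline_def by blast
      obtain X where X: "X \<in> L" "X \<noteq> U1" "X \<noteq> U2" using third[OF S W] inL ne Ld by blast
      have gX: "gpoint n k X" using X Ld by (auto simp: interval_def gpoint_def)
      have U1W: "U1 \<subseteq> W" "U2 \<subseteq> W" "X \<subseteq> W" using inL X Ld by (auto simp: interval_def)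
      have ps: "psub n k U1" "psub n k U2" "psub n k X" using g1 g2 gX by (auto simp: gpoint_def)
      have sub_dp: "\<And>H. dpoint n H \<Longrightarrow> fv.subspace H"
        by (auto simp: dpoint_def psub_def lsub_def)
      have cases3: "(dline n (pimage chi L) \<and> (\<forall>X\<in>L. chi X \<noteq> None) \<and>
            inj_on (\<lambda>X. the (chi X)) L)
         \<or> ((\<exists>H. pimage chi L = {H}) \<and> card {X\<in>L. chi X = None} = 1)
         \<or> (\<forall>X\<in>L. chi X = None)"
        using assms(3) gl unfolding linear_mapping_def by blast
      show ?thesis
      proof -
        { assume c: "dline n (pimage chi L)" "\<forall>X\<in>L. chi X \<noteq> None" "inj_on (\<lambda>X. the (chi X)) L"
          obtain H2 where H2: "chi U2 = Some H2" using c inL by blast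
          obtain H3 where H3: "chi X = Some H3" using c X by blast
          from c obtain S' where S': "lsub n (n - 1) S'"
            and pim: "pimage chi L = interval n (n - 1) S' (ambient n)" unfolding dline_def by blast
          have inP: "H1 \<in> pimage chi L" "H2 \<in> pimage chi L" "H3 \<in> pimage chi L"
            using Some H2 H3 inL X unfolding pimage_def by blast+
          then have hp: "psub n (n-1) H1" "psub n (n-1) H2" "psub n (n-1) H3"
            "S' \<subseteq> H1" "S' \<subseteq> H2" "S' \<subseteq> H3"
            using pim by (auto simp: interval_def)
          have d12: "H1 \<noteq> H2" using c(3) inL ne Some H2 by (metis inj_onD option.sel)
          have d23: "H2 \<noteq> H3" using c(3) inL X H2 H3 by (metis inj_onD option.sel)
          have i12: "H1 \<inter> H2 = S'" using hyp_inter[OF assms(1) hp(1) hp(2) d12 S' hp(4) hp(5)] .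
          have i23: "H2 \<inter> H3 = S'" using hyp_inter[OF assms(1) hp(2) hp(3) d23 S' hp(5) hp(6)] .
          have "U1 \<subseteq> H2" using hyp H2 by (simp add: ext_img_def)
          moreover have "U1 \<subseteq> H1" using null[OF g1 Some] .
          ultimately have "U1 \<subseteq> H3" using i12 hp(6) by blast
          moreover have "X \<subseteq> H3" using null[OF gX H3] .
          moreover have sH3: "fv.subspace H3" using sub_dp lm1[OF gX H3] by blast
          ultimately have "W \<subseteq> H3" using span2[OF ps(1) ps(3) X(2)[symmetric] U1W(1) U1W(3) W sH3] by blast
          moreover have "W \<subseteq> H2"
            using span2[OF ps(1) ps(2) ne U1W(1) U1W(2) W sub_dp[OF lm1[OF g2 H2]]]
              \<open>U1 \<subseteq> H2\<close> null[OF g2 H2] by blast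
          ultimately have "W \<subseteq> H1" using i23 hp(4) by blast
          then have ?thesis using e1 U1W by blast }
        moreover
        { assume c: "\<exists>H. pimage chi L = {H}" "card {X\<in>L. chi X = None} = 1"
          from c obtain H where pH: "pimage chi L = {H}" by blast
          have "H1 \<in> pimage chi L" using Some inL unfolding pimage_def by blast
          then have H1H: "H1 = H" using pH by blast
          have ?thesis
          proof (cases "chi U2")
            case (Some H2)
            then have "H2 \<in> pimage chi L" using inL unfolding pimage_def by blast
            then have "H2 = H" using pH by blast
            with null[OF g2 Some] e1 H1H show ?thesis using null[OF g2 Some] e1 H1H by auto
          next
            case None
            have "chi X \<noteq> None"
            proof
              assume xn: "chi X = None"
              have fin: "finite {X\<in>L. chi X = None}" using c(2) by (metis card.infinite zero_neq_one)
              have "{U2, X} \<subseteq> {X\<in>L. chi X = None}" using xn None inL X by auto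
              then have "card {U2, X} \<le> 1" using card_mono[OF fin] c(2) by simp
              then show False using X(3) by simp
            qed
            then obtain H3 where H3: "chi X = Some H3" by blast
            then have "H3 \<in> pimage chi L" using X unfolding pimage_def by blast
            then have "H3 = H" using pH by blast
            have sH: "fv.subspace H1" using sub_dp lm1[OF g1 Some] by blast
            have "W \<subseteq> H1"
              using span2[OF ps(1) ps(3) X(2)[symmetric] U1W(1) U1W(3) W sH]
                null[OF g1 Some] null[OF gX H3] \<open>H3 = H\<close> H1H by blast
            then show ?thesis using e1 U1W by blast
          qed }
        moreover
        { assume "\<forall>X\<in>L. chi X = None"
          then have False using inL Some by auto }
        ultimately show ?thesis using cases3 by blast
      qed
    qed
  qed
qed

end
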